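(* Let $(\mathcal{M},g)$ be a globally hyperbolic Lorentzian spacetime and let $\{\Sigma_t\}_{t\in\mathbb{R}}$ be a foliation of $\mathcal{M}$ into spacelike Cauchy hypersurfaces. Let $\mathcal{H}$ be a Hilbert space, $\mathcal{D}\subset\mathcal{H}$ a dense subset, and let $\hat\psi:\mathcal{M}\to\mathcal{L}(\mathcal{D},\mathcal{H})$ and $\hat\pi:\mathcal{M}\to\mathcal{L}(\mathcal{D},\mathcal{H})$ be maps such that (1) $\hat\psi(x)\mathcal{D}\subset\mathcal{D}$ and $\hat\psi(x)^\dagger\mathcal{D}\subset\mathcal{D}$ for all $x\in\mathcal{M}$; (2) $\hat\pi(x)\mathcal{D}\subset\mathcal{D}$ and $\hat\pi(x)^\dagger\mathcal{D}\subset\mathcal{D}$ for all $x\in\mathcal{M}$; (3) for every $t\in\mathbb{R}$ the restriction $\hat\pi|_{\Sigma_t}$ is weakly continuous, i.e. for all $\ket{\phi},\ket{\psi}\in\mathcal{D}$ the map $x\in\Sigma_t\mapsto\bra{\phi}\hat\pi(x)\ket{\psi}$ is continuous. Then for every $t\in\mathbb{R}$ and every $x\in\Sigma_t$: $[\hat\psi(x),\hat\pi(y)]=0$ for all $y\in\Sigma_t\setminus\{x\}$ if and only if $[\hat\psi(x),\hat\pi(y)]=0$ for all $y\in\Sigma_t$; and $\{\hat\psi(x),\hat\pi(y)\}=0$ for all $y\in\Sigma_t\setminus\{x\}$ if and only if $\{\hat\psi(x),\hat\pi(y)\}=0$ for all $y\in\Sigma_t$, where all (anti)commutators are understood as operators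 on $\mathcal{D}$.
   Context: $\mathcal{L}(\mathcal{D},\mathcal{H})$ denotes the linear maps from the dense subspace $\mathcal{D}\subset\mathcal{H}$ into $\mathcal{H}$. $[A,B]=AB-BA$ and $\{A,B\}=AB+BA$. *)

theory Defs
  imports "HOL-Analysis.Analysis"
begin

text \<open>The distribution has no complex inner-product spaces, so we introduce the class of
complex Hilbert spaces: a complete normed space with a complex scalar multiplication
(compatible with the real one) and a complex inner product, antilinear in the first and
linear in the second argument (physics / bra-ket convention), inducing the norm.\<close>

class chilbert = real_normed_vector + complete_space +
  fixes cscale :: "complex \<Rightarrow> 'a \<Rightarrow> 'a"
    and cinner :: "'a \<Rightarrow> 'a \<Rightarrow> complex"
  assumes cscale_add_right: "cscale a (x + y) = cscale a x + cscale a y"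
    and cscale_add_left: "cscale (a + b) x = cscale a x + cscale b x"
    and cscale_cscale: "cscale a (cscale b x) = cscale (a * b) x"
    and cscale_one: "cscale 1 x = x"
    and scaleR_cscale: "scaleR r x = cscale (complex_of_real r) x"
    and cinner_cnj: "cinner x y = cnj (cinner y x)"
    and cinner_add_right: "cinner x (y + z) = cinner x y + cinner x z"
    and cinner_cscale_right: "cinner x (cscale a y) = a * cinner x y"
    and cinner_self: "cinner x x = complex_of_real ((norm x)\<^sup>2)"

definition csubspace :: "'h::chilbert set \<Rightarrow> bool" where
  "csubspace D \<longleftrightarrow> 0 \<in> D \<and> (\<forall>x\<in>D. \<forall>y\<in>D. x + y \<in> D) \<and> (\<forall>c. \<forall>x\<in>D. cscale c x \<in> D)"

definition dense_subspace :: "'h::chilbert set \<Rightarrow> bool" where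
  "dense_subspace D \<longleftrightarrow> csubspace D \<and> closure D = UNIV"

text \<open>An element of L(D,H): a linear map defined on D (its values outside D are irrelevant).\<close>
definition lin_op_on :: "'h::chilbert set \<Rightarrow> ('h \<Rightarrow> 'h) \<Rightarrow> bool" where
  "lin_op_on D A \<longleftrightarrow> (\<forall>x\<in>D. \<forall>y\<in>D. A (x + y) = A x + A y) \<and> (\<forall>c. \<forall>x\<in>D. A (cscale c x) = cscale c (A x))"

definition maps_into :: "'h set \<Rightarrow> ('h \<Rightarrow> 'h) \<Rightarrow> bool" where
  "maps_into D A \<longleftrightarrow> (\<forall>x\<in>D. A x \<in> D)"

text \<open>"A-dagger D \<subseteq> D": every vector of D lies in the domain of the adjoint A-dagger of A \<in> L(D,H),
and its image under A-dagger lies in D.  (A-dagger phi = eta iff <phi|A xi> = <eta|xi> for all \<xi> \<in> D.)\<close>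
definition adjoint_maps_into :: "'h::chilbert set \<Rightarrow> ('h \<Rightarrow> 'h) \<Rightarrow> bool" where
  "adjoint_maps_into D A \<longleftrightarrow> (\<forall>\<phi>\<in>D. \<exists>\<eta>\<in>D. \<forall>\<xi>\<in>D. cinner \<phi> (A \<xi>) = cinner \<eta> \<xi>)"

definition commutator_zero_on :: "'h::chilbert set \<Rightarrow> ('h \<Rightarrow> 'h) \<Rightarrow> ('h \<Rightarrow> 'h) \<Rightarrow> bool" where
  "commutator_zero_on D A B \<longleftrightarrow> (\<forall>\<xi>\<in>D. A (B \<xi>) - B (A \<xi>) = 0)"

definition anticommutator_zero_on :: "'h::chilbert set \<Rightarrow> ('h \<Rightarrow> 'h) \<Rightarrow> ('h \<Rightarrow> 'h) \<Rightarrow> bool" where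
  "anticommutator_zero_on D A B \<longleftrightarrow> (\<forall>\<xi>\<in>D. A (B \<xi>) + B (A \<xi>) = 0)"

definition chart :: "'m::topological_space set \<Rightarrow> ('m \<Rightarrow> real^'n::finite) \<Rightarrow> bool" where
  "chart U \<phi> \<longleftrightarrow> open U \<and> open (\<phi> ` U) \<and> inj_on \<phi> U \<and> continuous_on U \<phi>
      \<and> continuous_on (\<phi> ` U) (inv_into U \<phi>)"

definition pdiff :: "(real^'n::finite \<Rightarrow> real) \<Rightarrow> 'n \<Rightarrow> real^'n \<Rightarrow> real" where
  "pdiff f i x = deriv (\<lambda>t. f (x + t *\<^sub>R axis i 1)) 0"

fun iter_pdiff :: "'n list \<Rightarrow> (real^'n \<Rightarrow> real) \<Rightarrow> real^'n \<Rightarrow> real" where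
  "iter_pdiff [] f = f"
| "iter_pdiff (i # is) f = pdiff (iter_pdiff is f) i"

definition smooth_fun_on :: "(real^'n::finite) set \<Rightarrow> (real^'n \<Rightarrow> real) \<Rightarrow> bool" where
  "smooth_fun_on S f \<longleftrightarrow> (\<forall>is. continuous_on S (iter_pdiff is f)
      \<and> (\<forall>i. \<forall>x\<in>S. (\<lambda>t. iter_pdiff is f (x + t *\<^sub>R axis i 1)) differentiable (at 0)))"

definition smooth_map_on :: "(real^'n::finite) set \<Rightarrow> (real^'n \<Rightarrow> real^'k) \<Rightarrow> bool" where
  "smooth_map_on S F \<longleftrightarrow> (\<forall>k. smooth_fun_on S (\<lambda>x. F x $ k))"

type_synonym ('m, 'n) chrt = "'m set \<times> ('m \<Rightarrow> real^'n)"

definition compatible :: "('m::topological_space, 'n::finite) chrt \<Rightarrow> ('m, 'n) chrt \<Rightarrow> bool" where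
  "compatible c d \<longleftrightarrow>
     smooth_map_on (snd c ` (fst c \<inter> fst d)) (snd d \<circ> inv_into (fst c) (snd c))
   \<and> smooth_map_on (snd d ` (fst c \<inter> fst d)) (snd c \<circ> inv_into (fst d) (snd d))"

definition maximal_smooth_atlas :: "('m::topological_space, 'n::finite) chrt set \<Rightarrow> bool" where
  "maximal_smooth_atlas A \<longleftrightarrow>
     (\<forall>c\<in>A. chart (fst c) (snd c)) \<and> \<Union>(fst ` A) = UNIV
   \<and> (\<forall>c\<in>A. \<forall>d\<in>A. compatible c d)
   \<and> (\<forall>U \<phi>. chart U \<phi> \<and> (\<forall>d\<in>A. compatible (U, \<phi>) d) \<longrightarrow> (U, \<phi>) \<in> A)"

definition transition_jac :: "('m::topological_space, 'n::finite) chrt \<Rightarrow> ('m, 'n) chrt \<Rightarrow> 'm \<Rightarrow> real^'n^'n" where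
  "transition_jac c d p = matrix (frechet_derivative (snd d \<circ> inv_into (fst c) (snd c)) (at (snd c p)))"

text \<open>Metric tensor given by its component matrices G c p in every chart c of the atlas.\<close>
type_synonym ('m, 'n) metric = "('m, 'n) chrt \<Rightarrow> 'm \<Rightarrow> real^'n^'n"

definition gval :: "('m, 'n::finite) metric \<Rightarrow> ('m, 'n) chrt \<Rightarrow> 'm \<Rightarrow> real^'n \<Rightarrow> real^'n \<Rightarrow> real" where
  "gval G c p v w = v \<bullet> (G c p *v w)"

definition lorentz_signature :: "real^'n::finite^'n \<Rightarrow> bool" where
  "lorentz_signature M \<longleftrightarrow> transpose M = M \<and>
     (\<exists>(P::real^'n^'n) i0. invertible P \<and>
        transpose P ** M ** P = (\<chi> i j. if i = j then (if i = i0 then -1 else 1) else 0))"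

definition lorentzian_metric :: "('m::topological_space, 'n::finite) chrt set \<Rightarrow> ('m, 'n) metric \<Rightarrow> bool" where
  "lorentzian_metric A G \<longleftrightarrow>
     (\<forall>c\<in>A. \<forall>i j. smooth_fun_on (snd c ` fst c) (\<lambda>y. G c (inv_into (fst c) (snd c) y) $ i $ j))
   \<and> (\<forall>c\<in>A. \<forall>p\<in>fst c. lorentz_signature (G c p))
   \<and> (\<forall>c\<in>A. \<forall>d\<in>A. \<forall>p\<in>fst c \<inter> fst d.
        G c p = transpose (transition_jac c d p) ** G d p ** transition_jac c d p)"

text \<open>Time orientation: a continuous timelike vector field T, given by components in charts.\<close>
definition time_orientation :: "('m::topological_space, 'n::finite) chrt set \<Rightarrow> ('m, 'n) metric
     \<Rightarrow> (('m, 'n) chrt \<Rightarrow> 'm \<Rightarrow> real^'n) \<Rightarrow> bool" where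
  "time_orientation A G T \<longleftrightarrow>
     (\<forall>c\<in>A. continuous_on (snd c ` fst c) (\<lambda>y. T c (inv_into (fst c) (snd c) y)))
   \<and> (\<forall>c\<in>A. \<forall>p\<in>fst c. gval G c p (T c p) (T c p) < 0)
   \<and> (\<forall>c\<in>A. \<forall>d\<in>A. \<forall>p\<in>fst c \<inter> fst d. T d p = transition_jac c d p *v T c p)"

definition spacetime :: "('m::{t2_space, second_countable_topology}, 'n::finite) chrt set \<Rightarrow> ('m, 'n) metric
     \<Rightarrow> (('m, 'n) chrt \<Rightarrow> 'm \<Rightarrow> real^'n) \<Rightarrow> bool" where
  "spacetime A G T \<longleftrightarrow> CARD('n) \<ge> 2 \<and> connected (UNIV :: 'm set)
     \<and> maximal_smooth_atlas A \<and> lorentzian_metric A G \<and> time_orientation A G T"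

definition C1_curve_on :: "('m::topological_space, 'n::finite) chrt set \<Rightarrow> real set \<Rightarrow> (real \<Rightarrow> 'm) \<Rightarrow> bool" where
  "C1_curve_on A I \<gamma> \<longleftrightarrow> continuous_on I \<gamma> \<and>
     (\<forall>c\<in>A. \<exists>\<gamma>'. continuous_on {t\<in>I. \<gamma> t \<in> fst c} \<gamma>' \<and>
        (\<forall>t\<in>I. \<gamma> t \<in> fst c \<longrightarrow> ((snd c \<circ> \<gamma>) has_vector_derivative \<gamma>' t) (at t within I)))"

definition velocity :: "('m, 'n::finite) chrt \<Rightarrow> real set \<Rightarrow> (real \<Rightarrow> 'm) \<Rightarrow> real \<Rightarrow> real^'n" where
  "velocity c I \<gamma> t = vector_derivative (snd c \<circ> \<gamma>) (at t within I)"

definition future_timelike_on :: "('m::topological_space, 'n::finite) chrt set \<Rightarrow> ('m, 'n) metric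
     \<Rightarrow> (('m, 'n) chrt \<Rightarrow> 'm \<Rightarrow> real^'n) \<Rightarrow> real set \<Rightarrow> (real \<Rightarrow> 'm) \<Rightarrow> bool" where
  "future_timelike_on A G T I \<gamma> \<longleftrightarrow> C1_curve_on A I \<gamma> \<and>
     (\<forall>c\<in>A. \<forall>t\<in>I. \<gamma> t \<in> fst c \<longrightarrow>
        gval G c (\<gamma> t) (velocity c I \<gamma> t) (velocity c I \<gamma> t) < 0
      \<and> gval G c (\<gamma> t) (velocity c I \<gamma> t) (T c (\<gamma> t)) < 0)"

definition future_causal_on :: "('m::topological_space, 'n::finite) chrt set \<Rightarrow> ('m, 'n) metric
     \<Rightarrow> (('m, 'n) chrt \<Rightarrow> 'm \<Rightarrow> real^'n) \<Rightarrow> real set \<Rightarrow> (real \<Rightarrow> 'm) \<Rightarrow> bool" where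
  "future_causal_on A G T I \<gamma> \<longleftrightarrow> C1_curve_on A I \<gamma> \<and>
     (\<forall>c\<in>A. \<forall>t\<in>I. \<gamma> t \<in> fst c \<longrightarrow>
        velocity c I \<gamma> t \<noteq> 0
      \<and> gval G c (\<gamma> t) (velocity c I \<gamma> t) (velocity c I \<gamma> t) \<le> 0
      \<and> gval G c (\<gamma> t) (velocity c I \<gamma> t) (T c (\<gamma> t)) < 0)"

text \<open>Causal relation J: p \<le> q iff q is reached from p by a piecewise C^1 future-directed causal
curve (a finite concatenation of C^1 ones) or q = p.\<close>
definition causal_step :: "('m::topological_space, 'n::finite) chrt set \<Rightarrow> ('m, 'n) metric
     \<Rightarrow> (('m, 'n) chrt \<Rightarrow> 'm \<Rightarrow> real^'n) \<Rightarrow> 'm \<Rightarrow> 'm \<Rightarrow> bool" where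
  "causal_step A G T p q \<longleftrightarrow> (\<exists>\<gamma>. \<gamma> 0 = p \<and> \<gamma> 1 = q \<and> future_causal_on A G T {0..1} \<gamma>)"

definition causal_le :: "('m::topological_space, 'n::finite) chrt set \<Rightarrow> ('m, 'n) metric
     \<Rightarrow> (('m, 'n) chrt \<Rightarrow> 'm \<Rightarrow> real^'n) \<Rightarrow> 'm \<Rightarrow> 'm \<Rightarrow> bool" where
  "causal_le A G T = (causal_step A G T)\<^sup>*\<^sup>*"

definition globally_hyperbolic :: "('m::topological_space, 'n::finite) chrt set \<Rightarrow> ('m, 'n) metric
     \<Rightarrow> (('m, 'n) chrt \<Rightarrow> 'm \<Rightarrow> real^'n) \<Rightarrow> bool" where
  "globally_hyperbolic A G T \<longleftrightarrow>
     (\<forall>p q. causal_le A G T p q \<and> causal_le A G T q p \<longrightarrow> p = q)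
   \<and> (\<forall>p q. compact {r. causal_le A G T p r \<and> causal_le A G T r q})"

text \<open>Inextendible timelike curves, parametrised on all of R (any open parameter interval can be
reparametrised to R) with no limit point in either direction.\<close>
definition inextendible_timelike :: "('m::topological_space, 'n::finite) chrt set \<Rightarrow> ('m, 'n) metric
     \<Rightarrow> (('m, 'n) chrt \<Rightarrow> 'm \<Rightarrow> real^'n) \<Rightarrow> (real \<Rightarrow> 'm) \<Rightarrow> bool" where
  "inextendible_timelike A G T \<gamma> \<longleftrightarrow> future_timelike_on A G T UNIV \<gamma>
     \<and> \<not> (\<exists>p. (\<gamma> \<longlongrightarrow> p) at_top) \<and> \<not> (\<exists>p. (\<gamma> \<longlongrightarrow> p) at_bot)"

definition cauchy_hypersurface :: "('m::topological_space, 'n::finite) chrt set \<Rightarrow> ('m, 'n) metric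
     \<Rightarrow> (('m, 'n) chrt \<Rightarrow> 'm \<Rightarrow> real^'n) \<Rightarrow> 'm set \<Rightarrow> bool" where
  "cauchy_hypersurface A G T S \<longleftrightarrow>
     (\<forall>\<gamma>. inextendible_timelike A G T \<gamma> \<longrightarrow> (\<exists>!t. \<gamma> t \<in> S))"

text \<open>Smooth embedded hypersurface, slice chart {y. y $ i0 = 0}, with spacelike tangent spaces.\<close>
definition spacelike_hypersurface :: "('m::topological_space, 'n::finite) chrt set \<Rightarrow> ('m, 'n) metric \<Rightarrow> 'm set \<Rightarrow> bool" where
  "spacelike_hypersurface A G S \<longleftrightarrow>
     (\<forall>p\<in>S. \<exists>c\<in>A. \<exists>i0. p \<in> fst c
        \<and> snd c ` (fst c \<inter> S) = snd c ` fst c \<inter> {y. y $ i0 = 0}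
        \<and> (\<forall>v. v \<noteq> 0 \<and> v $ i0 = 0 \<longrightarrow> gval G c p v v > 0))"

definition cauchy_foliation :: "('m::topological_space, 'n::finite) chrt set \<Rightarrow> ('m, 'n) metric
     \<Rightarrow> (('m, 'n) chrt \<Rightarrow> 'm \<Rightarrow> real^'n) \<Rightarrow> (real \<Rightarrow> 'm set) \<Rightarrow> bool" where
  "cauchy_foliation A G T \<Sigma> \<longleftrightarrow>
     (\<forall>t. spacelike_hypersurface A G (\<Sigma> t) \<and> cauchy_hypersurface A G T (\<Sigma> t))
   \<and> (\<forall>s t. s \<noteq> t \<longrightarrow> \<Sigma> s \<inter> \<Sigma> t = {}) \<and> (\<Union>t. \<Sigma> t) = UNIV"

end

theory Submission
  imports Defs
begin

lemma cinner_zero_right: "cinner (x::'h::chilbert) 0 = 0"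
proof -
  have "cinner x (0 + 0) = cinner x 0 + cinner x 0" by (rule cinner_add_right)
  then show ?thesis by simp
qed

lemma cinner_minus_right: "cinner (x::'h::chilbert) (- y) = - cinner x y"
proof -
  have "cinner x (y + - y) = cinner x y + cinner x (- y)" by (rule cinner_add_right)
  then have "cinner x y + cinner x (- y) = 0" by (simp add: cinner_zero_right)
  then show ?thesis by (rule minus_unique[symmetric])
qed

lemma cinner_diff_right: "cinner (x::'h::chilbert) (y - z) = cinner x y - cinner x z"
  unfolding diff_conv_add_uminus by (simp only: cinner_add_right cinner_minus_right)

lemma cinner_diff_left: "cinner ((y::'h::chilbert) - z) x = cinner y x - cinner z x"
  by (metis cinner_cnj cinner_diff_right complex_cnj_diff)

lemma zero_by_inner:
  fixes v :: "'h::chilbert"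
  assumes D: "dense_subspace D" and h: "\<forall>\<phi>\<in>D. cinner \<phi> v = 0"
  shows "v = 0"
proof (rule ccontr)
  assume "v \<noteq> 0"
  then have pos: "norm v > 0" by simp
  have "v \<in> closure D" using D unfolding dense_subspace_def by simp
  then obtain \<phi> where \<phi>: "\<phi> \<in> D" "dist \<phi> v < norm v"
    using pos closure_approachable by blast
  have c1: "cinner \<phi> v = 0" using h \<phi> by simp
  have c2: "cinner v \<phi> = 0" using c1 by (metis cinner_cnj complex_cnj_zero)
  have "complex_of_real ((norm (v - \<phi>))\<^sup>2) = cinner (v - \<phi>) (v - \<phi>)"
    by (simp add: cinner_self)
  also have "\<dots> = cinner v v - cinner v \<phi> - (cinner \<phi> v - cinner \<phi> \<phi>)"
    by (simp add: cinner_diff_left cinner_diff_right)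
  also have "\<dots> = complex_of_real ((norm v)\<^sup>2 + (norm \<phi>)\<^sup>2)"
    using c1 c2 by (simp add: cinner_self)
  finally have "(norm (v - \<phi>))\<^sup>2 = (norm v)\<^sup>2 + (norm \<phi>)\<^sup>2"
    using of_real_eq_iff by blast
  then have "(norm v)\<^sup>2 \<le> (norm (v - \<phi>))\<^sup>2" by simp
  then have "norm v \<le> norm (v - \<phi>)" by (simp add: power2_le_iff_abs_le)
  moreover have "norm (v - \<phi>) < norm v" using \<phi>(2) by (simp add: dist_norm norm_minus_commute)
  ultimately show False by simp
qed

lemma limit_point:
  fixes A :: "('m::{t2_space, second_countable_topology}, 'n::finite) chrt set"
  assumes st: "spacetime A G T" and fol: "cauchy_foliation A G T \<Sigma>" and x: "x \<in> \<Sigma> t"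
  shows "\<exists>p. (\<forall>n. p n \<in> \<Sigma> t - {x}) \<and> p \<longlonglongrightarrow> x"
proof -
  let ?S = "\<Sigma> t"
  have "spacelike_hypersurface A G ?S" using fol unfolding cauchy_foliation_def by blast
  then obtain c i0 where c: "c \<in> A" "x \<in> fst c"
      and sl: "snd c ` (fst c \<inter> ?S) = snd c ` fst c \<inter> {y. y $ i0 = 0}"
    using x unfolding spacelike_hypersurface_def by blast
  define U where "U = fst c"
  define f where "f = snd c"
  have ch: "chart U f" using st c unfolding spacetime_def maximal_smooth_atlas_def U_def f_def by blast
  have card: "CARD('n) \<ge> 2" using st unfolding spacetime_def by blast
  obtain j :: 'n where j: "j \<noteq> i0"
  proof (rule ccontr)
    assume "\<not> thesis"
    with that have "\<forall>j::'n. j = i0" by blast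
    then have u: "(UNIV::'n set) = {i0}" by auto
    have "card (UNIV::'n set) = 1" by (subst u) simp
    then show False using card by simp
  qed
  have opn: "open (f ` U)" and inj: "inj_on f U" and cinv: "continuous_on (f ` U) (inv_into U f)"
    using ch unfolding chart_def by auto
  have fx: "f x \<in> f ` U" using c U_def by simp
  then obtain e where e: "e > 0" "ball (f x) e \<subseteq> f ` U" using opn open_contains_ball by blast
  have fxi0: "f x $ i0 = 0" using sl c x f_def U_def by blast
  define z where "z n = f x + (e / (real n + 2)) *\<^sub>R axis j 1" for n :: nat
  define p where "p n = inv_into U f (z n)" for n
  have zball: "z n \<in> ball (f x) e" for n
  proof -
    have "dist (f x) (z n) = e / (real n + 2)"
      using e by (simp add: z_def dist_norm)
    also have "\<dots> < e" using e by (simp add: field_simps add_pos_nonneg)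
    finally show ?thesis by simp
  qed
  have zU: "z n \<in> f ` U" for n using zball e by blast
  have zi0: "z n $ i0 = 0" for n using fxi0 j by (simp add: z_def axis_def)
  have pn: "p n \<in> ?S - {x}" for n
  proof -
    have "z n \<in> f ` (U \<inter> ?S)" using sl zU zi0 unfolding U_def f_def by blast
    then obtain q where q: "q \<in> U" "q \<in> ?S" "z n = f q" by blast
    have "p n = q" using q inj by (simp add: p_def inv_into_f_f)
    moreover have "q \<noteq> x"
    proof
      assume "q = x"
      then have "(e / (real n + 2)) *\<^sub>R axis j (1::real) = 0" using q(3) by (simp add: z_def)
      then show False using e by (simp add: axis_eq_0_iff)
    qed
    ultimately show ?thesis using q by simp
  qed
  have zlim: "z \<longlonglongrightarrow> f x"
  proof -
    have "(\<lambda>n. e / (real n + 2)) \<longlonglongrightarrow> 0"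
    proof -
      have "(\<lambda>n. e / (real (Suc (Suc n)))) \<longlonglongrightarrow> 0"
        by (rule LIMSEQ_Suc[OF LIMSEQ_Suc[OF lim_const_over_n]])
      then show ?thesis by (simp add: add.commute)
    qed
    then have "(\<lambda>n. f x + (e / (real n + 2)) *\<^sub>R axis j (1::real)) \<longlonglongrightarrow> f x + 0 *\<^sub>R axis j 1"
      by (intro tendsto_intros)
    moreover have "z = (\<lambda>n. f x + (e / (real n + 2)) *\<^sub>R axis j (1::real))"
      by (rule ext) (simp add: z_def)
    ultimately show ?thesis by simp
  qed
  have "(\<lambda>n. inv_into U f (z n)) \<longlonglongrightarrow> inv_into U f (f x)"
    by (rule continuous_on_tendsto_compose[OF cinv zlim fx]) (simp add: zU)
  moreover have "p = (\<lambda>n. inv_into U f (z n))" by (rule ext) (simp add: p_def)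
  ultimately have "p \<longlonglongrightarrow> x" using inj c U_def by (simp add: inv_into_f_f)
  then show ?thesis using pn by blast
qed

lemma zero_at_limit:
  assumes cont: "continuous_on S g" and x: "x \<in> S"
    and p: "\<forall>n. p n \<in> S - {x}" "p \<longlonglongrightarrow> x"
    and z: "\<forall>y\<in>S - {x}. g y = (0::complex)"
  shows "g x = 0"
proof -
  have "(\<lambda>n. g (p n)) \<longlonglongrightarrow> g x"
    by (rule continuous_on_tendsto_compose[OF cont p(2) x]) (use p in auto)
  moreover have "(\<lambda>n. g (p n)) = (\<lambda>n. 0)" using p z by auto
  ultimately have "(\<lambda>n. 0::complex) \<longlonglongrightarrow> g x" by simp
  then show ?thesis by (rule LIMSEQ_unique[OF _ tendsto_const])
qed

theorem theorem1:
  fixes A :: "('m::{t2_space, second_countable_topology}, 'n::finite) chrt set"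
    and G :: "('m, 'n) metric"
    and T :: "('m, 'n) chrt \<Rightarrow> 'm \<Rightarrow> real^'n"
    and \<Sigma> :: "real \<Rightarrow> 'm set"
    and D :: "'h::chilbert set"
    and \<psi> \<pi> :: "'m \<Rightarrow> 'h \<Rightarrow> 'h"
  assumes st: "spacetime A G T"
    and gh: "globally_hyperbolic A G T"
    and fol: "cauchy_foliation A G T \<Sigma>"
    and D: "dense_subspace D"
    and lin_psi: "\<And>x. lin_op_on D (\<psi> x)"
    and lin_pi: "\<And>x. lin_op_on D (\<pi> x)"
    and psi_D: "\<And>x. maps_into D (\<psi> x) \<and> adjoint_maps_into D (\<psi> x)"
    and pi_D: "\<And>x. maps_into D (\<pi> x) \<and> adjoint_maps_into D (\<pi> x)"
    and weak_cont: "\<And>t \<phi> \<eta>. \<phi> \<in> D \<Longrightarrow> \<eta> \<in> D \<Longrightarrow>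
                      continuous_on (\<Sigma> t) (\<lambda>x. cinner \<phi> (\<pi> x \<eta>))"
  shows "\<forall>t. \<forall>x\<in>\<Sigma> t.
     ((\<forall>y\<in>\<Sigma> t - {x}. commutator_zero_on D (\<psi> x) (\<pi> y))
        \<longleftrightarrow> (\<forall>y\<in>\<Sigma> t. commutator_zero_on D (\<psi> x) (\<pi> y)))
   \<and> ((\<forall>y\<in>\<Sigma> t - {x}. anticommutator_zero_on D (\<psi> x) (\<pi> y))
        \<longleftrightarrow> (\<forall>y\<in>\<Sigma> t. anticommutator_zero_on D (\<psi> x) (\<pi> y)))"
proof (intro allI ballI)
  fix t x assume x: "x \<in> \<Sigma> t"
  obtain p where p: "\<forall>n. p n \<in> \<Sigma> t - {x}" "p \<longlonglongrightarrow> x"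
    using limit_point[OF st fol x] by blast
  have c1: "continuous_on (\<Sigma> t) (\<lambda>y. cinner \<phi> (\<psi> x (\<pi> y \<eta>)))" if \<phi>D: "\<phi> \<in> D" and \<eta>D: "\<eta> \<in> D" for \<phi> \<eta>
  proof -
    obtain \<zeta> where \<zeta>: "\<zeta> \<in> D" "\<forall>\<xi>\<in>D. cinner \<phi> (\<psi> x \<xi>) = cinner \<zeta> \<xi>"
    proof -
      have "adjoint_maps_into D (\<psi> x)" using psi_D[of x] by (rule conjunct2)
      then have "\<exists>\<zeta>\<in>D. \<forall>\<xi>\<in>D. cinner \<phi> (\<psi> x \<xi>) = cinner \<zeta> \<xi>"
        using \<phi>D unfolding adjoint_maps_into_def by (rule bspec)
      then show ?thesis using that by blast
    qed
    have "\<pi> y \<eta> \<in> D" for y using pi_D[of y] \<eta>D unfolding maps_into_def by blast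
    then have eq: "(\<lambda>y. cinner \<phi> (\<psi> x (\<pi> y \<eta>))) = (\<lambda>y. cinner \<zeta> (\<pi> y \<eta>))" using \<zeta> by auto
    show ?thesis unfolding eq by (rule weak_cont[OF \<zeta>(1) \<eta>D])
  qed
  have c2: "continuous_on (\<Sigma> t) (\<lambda>y. cinner \<phi> (\<pi> y (\<psi> x \<eta>)))" if \<phi>D: "\<phi> \<in> D" and \<eta>D: "\<eta> \<in> D" for \<phi> \<eta>
  proof -
    have "\<psi> x \<eta> \<in> D" using psi_D[of x] \<eta>D unfolding maps_into_def by blast
    then show ?thesis by (rule weak_cont[OF \<phi>D])
  qed
  have R1: "\<forall>y\<in>\<Sigma> t. commutator_zero_on D (\<psi> x) (\<pi> y)"
    if h: "\<forall>y\<in>\<Sigma> t - {x}. commutator_zero_on D (\<psi> x) (\<pi> y)"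
    proof
      fix y assume y: "y \<in> \<Sigma> t"
      show "commutator_zero_on D (\<psi> x) (\<pi> y)"
      proof (cases "y = x")
        case False then show ?thesis using h y by blast
      next
        case True
        show ?thesis unfolding commutator_zero_on_def True
        proof
          fix \<eta> assume \<eta>: "\<eta> \<in> D"
          show "\<psi> x (\<pi> x \<eta>) - \<pi> x (\<psi> x \<eta>) = 0"
          proof (rule zero_by_inner[OF D], intro ballI)
            fix \<phi> assume \<phi>: "\<phi> \<in> D"
            let ?g = "\<lambda>y. cinner \<phi> (\<psi> x (\<pi> y \<eta>)) - cinner \<phi> (\<pi> y (\<psi> x \<eta>))"
            have "continuous_on (\<Sigma> t) ?g" using c1[OF \<phi> \<eta>] c2[OF \<phi> \<eta>] by (intro continuous_on_diff)
            moreover have "\<forall>y\<in>\<Sigma> t - {x}. ?g y = 0"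
            proof
              fix y assume "y \<in> \<Sigma> t - {x}"
              then have "commutator_zero_on D (\<psi> x) (\<pi> y)" using h by blast
              then have "\<psi> x (\<pi> y \<eta>) - \<pi> y (\<psi> x \<eta>) = 0"
                using \<eta> unfolding commutator_zero_on_def by blast
              then have "cinner \<phi> (\<psi> x (\<pi> y \<eta>) - \<pi> y (\<psi> x \<eta>)) = 0"
                by (simp add: cinner_zero_right)
              then show "?g y = 0" by (simp only: cinner_diff_right)
            qed
            ultimately have "?g x = 0" using zero_at_limit x p by blast
            then show "cinner \<phi> (\<psi> x (\<pi> x \<eta>) - \<pi> x (\<psi> x \<eta>)) = 0" by (simp add: cinner_diff_right)
          qed
        qed
      qed
    qed
  have R2: "\<forall>y\<in>\<Sigma> t. anticommutator_zero_on D (\<psi> x) (\<pi> y)"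
    if h: "\<forall>y\<in>\<Sigma> t - {x}. anticommutator_zero_on D (\<psi> x) (\<pi> y)"
    proof
      fix y assume y: "y \<in> \<Sigma> t"
      show "anticommutator_zero_on D (\<psi> x) (\<pi> y)"
      proof (cases "y = x")
        case False then show ?thesis using h y by blast
      next
        case True
        show ?thesis unfolding anticommutator_zero_on_def True
        proof
          fix \<eta> assume \<eta>: "\<eta> \<in> D"
          show "\<psi> x (\<pi> x \<eta>) + \<pi> x (\<psi> x \<eta>) = 0"
          proof (rule zero_by_inner[OF D], intro ballI)
            fix \<phi> assume \<phi>: "\<phi> \<in> D"
            let ?g = "\<lambda>y. cinner \<phi> (\<psi> x (\<pi> y \<eta>)) + cinner \<phi> (\<pi> y (\<psi> x \<eta>))"
            have "continuous_on (\<Sigma> t) ?g" using c1[OF \<phi> \<eta>] c2[OF \<phi> \<eta>] by (intro continuous_on_add)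
            moreover have "\<forall>y\<in>\<Sigma> t - {x}. ?g y = 0"
            proof
              fix y assume "y \<in> \<Sigma> t - {x}"
              then have "anticommutator_zero_on D (\<psi> x) (\<pi> y)" using h by blast
              then have "\<psi> x (\<pi> y \<eta>) + \<pi> y (\<psi> x \<eta>) = 0"
                using \<eta> unfolding anticommutator_zero_on_def by blast
              then have "cinner \<phi> (\<psi> x (\<pi> y \<eta>) + \<pi> y (\<psi> x \<eta>)) = 0"
                by (simp add: cinner_zero_right)
              then show "?g y = 0" by (simp only: cinner_add_right)
            qed
            ultimately have "?g x = 0" using zero_at_limit x p by blast
            then show "cinner \<phi> (\<psi> x (\<pi> x \<eta>) + \<pi> x (\<psi> x \<eta>)) = 0" by (simp add: cinner_add_right)
          qed
        qed
      qed
    qed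
  show "((\<forall>y\<in>\<Sigma> t - {x}. commutator_zero_on D (\<psi> x) (\<pi> y))
        \<longleftrightarrow> (\<forall>y\<in>\<Sigma> t. commutator_zero_on D (\<psi> x) (\<pi> y)))
   \<and> ((\<forall>y\<in>\<Sigma> t - {x}. anticommutator_zero_on D (\<psi> x) (\<pi> y))
        \<longleftrightarrow> (\<forall>y\<in>\<Sigma> t. anticommutator_zero_on D (\<psi> x) (\<pi> y)))"
    using R1 R2 by blast
qed

end
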